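(* Let $n\ge 3$, let $H$ be an exploding double chain and let $H_n=\{p_i,q_i : 1\le i\le n\}$ be its initial part. Let $G'$ be a graph on $n$ vertices, and let $G$ be a plane graph on the same vertex set which contains $G'$ as a spanning subgraph and which has a one-sided Hamiltonian cycle $(v_1,v_2,\ldots,v_n)$ with special edge $v_nv_1$. Then $G'$ has a crossing-free straight-line drawing with vertices on points of $H_n$ in which, for every $i\in\{1,\ldots,n\}$, the vertex $v_i$ is placed on $p_i$ or on $q_i$.
   Context: Exploding double chain: let $(y_i)_{i\ge1}$ be a sequence of reals with $y_1=y_2=0$ such that for every $n\ge 2$, $y_{n+1}>0$ and every line through two distinct points of $H_n=\{p_i,q_i: 1\le i\le n\}$, where $p_i=(i,y_i)$ and $q_i=(i,-y_i)$, meets the vertical line $x=n+1$ (if it meets it) in a point whose $y$-coordinate lies strictly between $-y_{n+1}$ and $y_{n+1}$. The set $H=\{p_i,q_i: i\ge 1\}$ is an exploding double chain. Since $p_1=q_1$ and $p_2=q_2$, $|H_n|=2n-2$. (For instance $y_1=y_2=0$, $y_i=3^{i-3}$ for $i\ge 3$ works.) One-sided Hamiltonian cycle: a plane graph $G$ on $n\ge 3$ vertices has a one-sided Hamiltonian cycle $(v_1,\ldots,v_n)$ with special edge $v_nv_1$ if $(v_1,\ldots,v_n)$ is a Hamiltonian cycle of $G$, the edge $v_nv_1$ is incident to the outer face, and, letting $D$ be the closed bounded region of the plane whose boundary is this cycle, for every $j\in\{2,\ldots,n\}$ the edges of $G$ not on the cycle that join $v_j$ to some $v_i$ with $i<j$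 are either all drawn in the interior of $D$ or all drawn in the exterior of $D$. *)

theory Defs
  imports "HOL-Analysis.Analysis"
begin

definition pt :: "(nat \<Rightarrow> real) \<Rightarrow> nat \<Rightarrow> complex" where
  "pt y i = Complex (real i) (y i)"

definition qt :: "(nat \<Rightarrow> real) \<Rightarrow> nat \<Rightarrow> complex" where
  "qt y i = Complex (real i) (- y i)"

definition Hset :: "(nat \<Rightarrow> real) \<Rightarrow> nat \<Rightarrow> complex set" where
  "Hset y n = pt y ` {1..n} \<union> qt y ` {1..n}"

text \<open>Every non-vertical line through two distinct points of H_n meets the vertical line
  x = n+1 at a point with y-coordinate strictly between -y(n+1) and y(n+1).
  (Vertical lines do not meet x = n+1.)\<close>
definition exploding_double_chain :: "(nat \<Rightarrow> real) \<Rightarrow> bool" where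
  "exploding_double_chain y \<longleftrightarrow>
     y 1 = 0 \<and> y 2 = 0 \<and>
     (\<forall>n\<ge>2. y (Suc n) > 0 \<and>
        (\<forall>a\<in>Hset y n. \<forall>b\<in>Hset y n. a \<noteq> b \<longrightarrow> Re a \<noteq> Re b \<longrightarrow>
           \<bar>Im a + (Im b - Im a) * (real (Suc n) - Re a) / (Re b - Re a)\<bar> < y (Suc n)))"

definition simple_graph :: "'v set \<Rightarrow> 'v set set \<Rightarrow> bool" where
  "simple_graph V E \<longleftrightarrow> finite V \<and> (\<forall>e\<in>E. \<exists>u w. u \<in> V \<and> w \<in> V \<and> u \<noteq> w \<and> e = {u, w})"

definition plane_drawing ::
  "'v set \<Rightarrow> 'v set set \<Rightarrow> ('v \<Rightarrow> complex) \<Rightarrow> ('v set \<Rightarrow> real \<Rightarrow> complex) \<Rightarrow> bool" where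
  "plane_drawing V E pos c \<longleftrightarrow>
     simple_graph V E \<and> inj_on pos V \<and>
     (\<forall>e\<in>E. arc (c e) \<and> {pathstart (c e), pathfinish (c e)} = pos ` e) \<and>
     (\<forall>e\<in>E. \<forall>x\<in>V. pos x \<in> path_image (c e) \<longrightarrow> x \<in> e) \<and>
     (\<forall>e\<in>E. \<forall>f\<in>E. e \<noteq> f \<longrightarrow> path_image (c e) \<inter> path_image (c f) \<subseteq> pos ` (e \<inter> f))"

definition drawing_set :: "'v set \<Rightarrow> 'v set set \<Rightarrow> ('v \<Rightarrow> complex) \<Rightarrow> ('v set \<Rightarrow> real \<Rightarrow> complex) \<Rightarrow> complex set" where
  "drawing_set V E pos c = pos ` V \<union> (\<Union>e\<in>E. path_image (c e))"

definition outer_face :: "'v set \<Rightarrow> 'v set set \<Rightarrow> ('v \<Rightarrow> complex) \<Rightarrow> ('v set \<Rightarrow> real \<Rightarrow> complex) \<Rightarrow> complex set" where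
  "outer_face V E pos c = outside (drawing_set V E pos c)"

definition open_arc :: "(real \<Rightarrow> complex) \<Rightarrow> complex set" where
  "open_arc g = path_image g - {pathstart g, pathfinish g}"

definition cycle_edges :: "(nat \<Rightarrow> 'v) \<Rightarrow> nat \<Rightarrow> 'v set set" where
  "cycle_edges v n = {{v i, v (Suc i)} | i. 1 \<le> i \<and> i < n} \<union> {{v n, v 1}}"

definition hamiltonian_cycle :: "'v set \<Rightarrow> 'v set set \<Rightarrow> nat \<Rightarrow> (nat \<Rightarrow> 'v) \<Rightarrow> bool" where
  "hamiltonian_cycle V E n v \<longleftrightarrow> n \<ge> 3 \<and> bij_betw v {1..n} V \<and> cycle_edges v n \<subseteq> E"

definition one_sided_ham_cycle ::
  "'v set \<Rightarrow> 'v set set \<Rightarrow> ('v \<Rightarrow> complex) \<Rightarrow> ('v set \<Rightarrow> real \<Rightarrow> complex) \<Rightarrow> nat \<Rightarrow> (nat \<Rightarrow> 'v) \<Rightarrow> bool" where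
  "one_sided_ham_cycle V E pos c n v \<longleftrightarrow>
     hamiltonian_cycle V E n v \<and>
     path_image (c {v n, v 1}) \<subseteq> closure (outer_face V E pos c) \<and>
     (let C = (\<Union>e\<in>cycle_edges v n. path_image (c e)) in
      \<forall>j\<in>{2..n}.
        (\<forall>i\<in>{1..<j}. {v i, v j} \<in> E - cycle_edges v n \<longrightarrow> open_arc (c {v i, v j}) \<subseteq> inside C) \<or>
        (\<forall>i\<in>{1..<j}. {v i, v j} \<in> E - cycle_edges v n \<longrightarrow> open_arc (c {v i, v j}) \<subseteq> outside C))"

definition straight_line_plane :: "'v set \<Rightarrow> 'v set set \<Rightarrow> ('v \<Rightarrow> complex) \<Rightarrow> bool" where
  "straight_line_plane V E pos \<longleftrightarrow>
     inj_on pos V \<and>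
     (\<forall>e\<in>E. \<forall>x\<in>V. pos x \<in> convex hull (pos ` e) \<longrightarrow> x \<in> e) \<and>
     (\<forall>e\<in>E. \<forall>f\<in>E. e \<noteq> f \<longrightarrow> convex hull (pos ` e) \<inter> convex hull (pos ` f) \<subseteq> pos ` (e \<inter> f))"

end

theory Submission
  imports Defs "HOL-Complex_Analysis.Complex_Analysis"
begin



lemma open_arc_eq:
  assumes "arc g" shows "open_arc g = g ` {0<..<1}"
proof -
  have inj: "inj_on g {0..1}" using assms by (simp add: arc_def)
  show ?thesis
    unfolding open_arc_def path_image_def pathstart_def pathfinish_def
  proof (intro equalityI subsetI)
    fix x assume "x \<in> g ` {0..1} - {g 0, g 1}"
    then obtain t where "t \<in> {0..1}" "x = g t" "t \<noteq> 0" "t \<noteq> 1" by force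
    then show "x \<in> g ` {0<..<1}" by auto
  next
    fix x assume "x \<in> g ` {0<..<1}"
    then obtain t where t: "0 < t" "t < 1" "x = g t" by auto
    have "g t \<noteq> g 0" using inj t by (metis atLeastAtMost_iff inj_on_contraD less_eq_real_def order_less_irrefl zero_le_one)
    moreover have "g t \<noteq> g 1" using inj t by (metis atLeastAtMost_iff inj_on_contraD less_eq_real_def order_less_irrefl zero_le_one)
    ultimately show "x \<in> g ` {0..1} - {g 0, g 1}" using t by auto
  qed
qed

lemma open_arc_connected: "arc g \<Longrightarrow> connected (open_arc g)"
  apply (simp add: open_arc_eq)
  apply (rule connected_continuous_image)
   apply (rule continuous_on_subset[of "{0..1}"])
  using arc_imp_path path_def apply blast
   apply auto
  done

lemma open_arc_nonempty: "arc g \<Longrightarrow> g (1/2) \<in> open_arc g"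
  by (simp add: open_arc_eq)

lemma open_arc_subset: "open_arc g \<subseteq> path_image g"
  by (auto simp: open_arc_def)

lemma path_image_closure_open_arc:
  assumes "arc g" shows "path_image g \<subseteq> closure (open_arc g)"
proof -
  have "g ` closure {0<..<(1::real)} \<subseteq> closure (g ` {0<..<1})"
    apply (rule image_closure_subset)
    using assms arc_imp_path[of g] unfolding path_def apply (simp add: closure_greaterThanLessThan)
     apply simp apply (rule closure_subset)
    done
  then show ?thesis using assms by (simp add: open_arc_eq path_image_def closure_greaterThanLessThan)
qed

lemma path_image_split_ends:
  assumes "arc g" shows "path_image g = open_arc g \<union> {pathstart g, pathfinish g}"
  by (auto simp: open_arc_def)




locale three_arcs =
  fixes c1 c2 g :: "real \<Rightarrow> complex" and a b :: complex
  assumes arcs: "arc c1" "arc c2" "arc g"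
    and ends: "pathstart c1 = a" "pathfinish c1 = b" "pathstart c2 = a" "pathfinish c2 = b"
              "pathstart g = a" "pathfinish g = b"
    and ab: "a \<noteq> b"
    and i12: "path_image c1 \<inter> path_image c2 = {a,b}"
    and i1g: "path_image c1 \<inter> path_image g = {a,b}"
    and i2g: "path_image c2 \<inter> path_image g = {a,b}"
begin

lemma sym1: "three_arcs c2 c1 g a b"
  using arcs ends ab i12 i1g i2g by unfold_locales auto

lemma loop_facts:
  assumes "arc p" "arc q" "pathstart p = a" "pathfinish p = b" "pathstart q = a" "pathfinish q = b"
    "path_image p \<inter> path_image q = {a,b}"
  shows "simple_path (p +++ reversepath q)" "pathfinish (p +++ reversepath q) = pathstart (p +++ reversepath q)"
    "path_image (p +++ reversepath q) = path_image p \<union> path_image q"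
    "path (p +++ reversepath q)"
proof -
  show sp: "simple_path (p +++ reversepath q)"
    using assms by (subst simple_path_join_loop_eq) (auto simp: arc_reversepath)
  show "pathfinish (p +++ reversepath q) = pathstart (p +++ reversepath q)" using assms by simp
  show "path_image (p +++ reversepath q) = path_image p \<union> path_image q"
    using assms by (simp add: path_image_join)
  show "path (p +++ reversepath q)" using sp simple_path_imp_path by blast
qed

lemma jordan_facts:
  assumes "arc p" "arc q" "pathstart p = a" "pathfinish p = b" "pathstart q = a" "pathfinish q = b"
    "path_image p \<inter> path_image q = {a,b}"
  shows "inside (path_image p \<union> path_image q) \<noteq> {}"
    "frontier (inside (path_image p \<union> path_image q)) = path_image p \<union> path_image q"
    "open (inside (path_image p \<union> path_image q))"
    "connected (inside (path_image p \<union> path_image q))"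
    "inside (path_image p \<union> path_image q) \<union> outside (path_image p \<union> path_image q) = - (path_image p \<union> path_image q)"
  using Jordan_inside_outside[OF loop_facts(1,2)[OF assms]] loop_facts(3)[OF assms] by auto

lemma closed_pi: "closed (path_image p \<union> path_image q)" if "arc p" "arc q" for p q :: "real \<Rightarrow> complex"
  using that by (meson closed_Un closed_path_image arc_imp_path)

lemma inside_chord:
  assumes g_in: "open_arc g \<subseteq> inside (path_image c1 \<union> path_image c2)"
    and T: "connected T" "T \<subseteq> inside (path_image c1 \<union> path_image c2)" "T \<inter> path_image g = {}"
    and p: "p \<in> closure T" "p \<in> path_image c1" "p \<notin> {a,b}"
    and q: "q \<in> closure T" "q \<in> path_image c2" "q \<notin> {a,b}"
  shows False
proof -
  let ?I1 = "inside (path_image c1 \<union> path_image g)"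
  let ?I2 = "inside (path_image c2 \<union> path_image g)"
  have ne: "path_image g \<inter> inside (path_image c1 \<union> path_image c2) \<noteq> {}"
    using g_in open_arc_nonempty[OF arcs(3)] open_arc_subset by blast
  obtain d: "?I1 \<inter> ?I2 = {}" and u: "?I1 \<union> ?I2 \<union> (path_image g - {a,b}) = inside (path_image c1 \<union> path_image c2)"
    by (rule split_inside_simple_closed_curve[of c1 a b c2 g])
       (use arcs ends ab i12 i1g i2g ne in \<open>auto simp: arc_imp_simple_path\<close>)
  have o1: "open ?I1" and o2: "open ?I2"
    using arcs by (auto intro!: open_inside closed_pi)
  have "T \<subseteq> ?I1 \<union> ?I2" using T u by blast
  then have "T \<subseteq> ?I1 \<or> T \<subseteq> ?I2"
    using T(1) o1 o2 d unfolding connected_def by blast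
  then show False
  proof
    assume "T \<subseteq> ?I1"
    then have "q \<in> closure ?I1" using q closure_mono by blast
    then have "q \<in> ?I1 \<union> frontier ?I1" by (simp add: closure_Un_frontier)
    moreover have "frontier ?I1 \<subseteq> path_image c1 \<union> path_image g"
      using arcs by (intro frontier_inside_subset closed_pi) auto
    moreover have "?I1 \<subseteq> inside (path_image c1 \<union> path_image c2)" using u by blast
    moreover have "q \<notin> inside (path_image c1 \<union> path_image c2)" using q inside_no_overlap by blast
    ultimately show False using q i12 i2g by blast
  next
    assume "T \<subseteq> ?I2"
    then have "p \<in> closure ?I2" using p closure_mono by blast
    then have "p \<in> ?I2 \<union> frontier ?I2" by (simp add: closure_Un_frontier)
    moreover have "frontier ?I2 \<subseteq> path_image c2 \<union> path_image g"
      using arcs by (intro frontier_inside_subset closed_pi) auto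
    moreover have "?I2 \<subseteq> inside (path_image c1 \<union> path_image c2)" using u by blast
    moreover have "p \<notin> inside (path_image c1 \<union> path_image c2)" using p inside_no_overlap by blast
    ultimately show False using p i12 i1g by blast
  qed
qed

lemma z_out:
  assumes g_out: "open_arc g \<subseteq> outside (path_image c1 \<union> path_image c2)"
    and e2: "path_image c2 \<inter> inside (path_image c1 \<union> path_image g) = {}"
    and z: "z \<in> inside (path_image c1 \<union> path_image c2)"
  shows "z \<in> outside (path_image c1 \<union> path_image g)"
proof -
  let ?U = "inside (path_image c1 \<union> path_image c2)"
  let ?I1 = "inside (path_image c1 \<union> path_image g)"
  have gsplit: "path_image g = open_arc g \<union> {a,b}" using path_image_split_ends[OF arcs(3)] ends by simp
  have ab_in: "a \<in> path_image c1" "b \<in> path_image c1" using ends by auto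
  have disj: "?U \<inter> (path_image c1 \<union> path_image g) = {}"
  proof -
    have "?U \<inter> outside (path_image c1 \<union> path_image c2) = {}" by (auto simp: inside_outside)
    then show ?thesis using g_out gsplit ab_in inside_no_overlap[of "path_image c1 \<union> path_image c2"] by blast
  qed
  have fr: "frontier ?I1 \<subseteq> path_image c1 \<union> path_image g"
    using arcs by (intro frontier_inside_subset closed_pi) auto
  have zn: "z \<notin> path_image c1 \<union> path_image g" using disj z by blast
  have "z \<notin> ?I1"
  proof
    assume zI: "z \<in> ?I1"
    have "?U \<subseteq> ?I1"
    proof (rule ccontr)
      assume "\<not> ?U \<subseteq> ?I1"
      then have "?U \<inter> frontier ?I1 \<noteq> {}"
        using connected_Int_frontier[of ?U ?I1] jordan_facts(4)[OF arcs(1,2) ends(1-4) i12] z zI by blast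
      then show False using fr disj by blast
    qed
    let ?w = "c2 (1/2)"
    have w: "?w \<in> open_arc c2" by (rule open_arc_nonempty[OF arcs(2)])
    have wn: "?w \<notin> path_image c1 \<union> path_image g"
      using w i12 i2g ends unfolding open_arc_def by auto
    have "?w \<in> frontier ?U"
      using w open_arc_subset jordan_facts(2)[OF arcs(1,2) ends(1-4) i12] by blast
    then have "?w \<in> closure ?I1"
      using \<open>?U \<subseteq> ?I1\<close> closure_mono frontier_def by (metis Diff_iff subsetD)
    then have "?w \<in> ?I1" using fr wn by (auto simp: closure_Un_frontier)
    then show False using e2 w open_arc_subset by blast
  qed
  then show ?thesis using zn by (auto simp: inside_outside)
qed

lemma theta:
  assumes g_out: "open_arc g \<subseteq> outside (path_image c1 \<union> path_image c2)"
  shows "path_image c2 \<inter> inside (path_image c1 \<union> path_image g) \<noteq> {} \<or>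
         path_image c1 \<inter> inside (path_image c2 \<union> path_image g) \<noteq> {}"
proof (rule ccontr)
  assume "\<not> ?thesis"
  then have e2: "path_image c2 \<inter> inside (path_image c1 \<union> path_image g) = {}"
    and e1: "path_image c1 \<inter> inside (path_image c2 \<union> path_image g) = {}" by auto
  obtain z where z: "z \<in> inside (path_image c1 \<union> path_image c2)"
    using jordan_facts(1)[OF arcs(1,2) ends(1-4) i12] by blast
  have z1: "z \<in> outside (path_image c1 \<union> path_image g)" by (rule z_out[OF g_out e2 z])
  have z2: "z \<in> outside (path_image c2 \<union> path_image g)"
    using three_arcs.z_out[OF sym1, of z] g_out e1 z by (simp add: Un_commute)
  have zc1: "z \<notin> path_image c1" and zc2: "z \<notin> path_image c2" and zg: "z \<notin> path_image g"
    using z1 z2 outside_no_overlap by blast+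
  have pa: "path c1" "path c2" "path g" using arcs arc_imp_path by auto
  have w: "winding_number (p +++ reversepath q) z = winding_number p z - winding_number q z"
    if "path p" "path q" "z \<notin> path_image p" "z \<notin> path_image q" "pathfinish p = pathfinish q" for p q
    using that by (simp add: winding_number_join winding_number_reversepath)
  have "winding_number (c1 +++ reversepath g) z = 0"
    using winding_number_zero_in_outside[OF loop_facts(4,2)[OF arcs(1,3) ends(1,2,5,6) i1g]] z1
          loop_facts(3)[OF arcs(1,3) ends(1,2,5,6) i1g] by simp
  moreover have "winding_number (c2 +++ reversepath g) z = 0"
    using winding_number_zero_in_outside[OF loop_facts(4,2)[OF arcs(2,3) ends(3,4,5,6) i2g]] z2
          loop_facts(3)[OF arcs(2,3) ends(3,4,5,6) i2g] by simp
  moreover have "winding_number (c1 +++ reversepath c2) z \<noteq> 0"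
  proof -
    have "z \<in> inside (path_image (c1 +++ reversepath c2))"
      using z loop_facts(3)[OF arcs(1,2) ends(1-4) i12] by simp
    then show ?thesis
      using simple_closed_path_winding_number_inside[OF loop_facts(1)[OF arcs(1,2) ends(1-4) i12]]
      by (metis one_neq_neg_one one_neq_zero neg_equal_0_iff_equal)
  qed
  ultimately show False
    using w[OF pa(1,3) zc1 zg] w[OF pa(2,3) zc2 zg] w[OF pa(1,2) zc1 zc2] ends by simp
qed

lemma outside_chord1:
  assumes g_out: "open_arc g \<subseteq> outside (path_image c1 \<union> path_image c2)"
    and ne: "path_image c2 \<inter> inside (path_image c1 \<union> path_image g) \<noteq> {}"
    and T: "connected T" "T \<subseteq> outside (path_image c1 \<union> path_image c2)" "T \<inter> path_image g = {}"
    and p: "p \<in> closure T" "p \<in> path_image c1" "p \<notin> {a,b}"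
    and q: "q \<in> closure T" "q \<in> path_image c2" "q \<notin> {a,b}"
  shows False
proof -
  let ?U = "inside (path_image c1 \<union> path_image g)"
  let ?W = "inside (path_image g \<union> path_image c2)"
  let ?S = "inside (path_image c1 \<union> path_image c2)"
  obtain d: "?S \<inter> ?W = {}" and u: "?S \<union> ?W \<union> (path_image c2 - {a,b}) = ?U"
    by (rule split_inside_simple_closed_curve[of c1 a b g c2])
       (use arcs ends ab i12 i1g i2g ne in \<open>auto simp: arc_imp_simple_path Int_commute\<close>)
  have oU: "open ?U" using arcs by (auto intro!: open_inside closed_pi)
  have frU: "frontier ?U \<subseteq> path_image c1 \<union> path_image g"
    using arcs by (intro frontier_inside_subset closed_pi) auto
  have frW: "frontier ?W \<subseteq> path_image g \<union> path_image c2"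
    using arcs by (intro frontier_inside_subset closed_pi) auto
  have qU: "q \<in> ?U" using u q by blast
  have "T \<inter> ?U \<noteq> {}"
  proof
    assume "T \<inter> ?U = {}"
    then have "?U \<inter> closure T = {}" using open_Int_closure_eq_empty[OF oU] by blast
    then show False using qU q by blast
  qed
  moreover have "T \<inter> frontier ?U = {}"
    using frU T outside_no_overlap[of "path_image c1 \<union> path_image c2"] by blast
  ultimately have "T \<subseteq> ?U" using connected_Int_frontier[OF T(1), of ?U] by blast
  moreover have "T \<inter> ?S = {}" using T(2) by (auto simp: inside_outside)
  moreover have "T \<inter> path_image c2 = {}" using T(2) outside_no_overlap[of "path_image c1 \<union> path_image c2"] by blast
  ultimately have TW: "T \<subseteq> ?W" using u by blast
  have "p \<in> closure ?W" using p TW closure_mono by blast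
  then have "p \<in> ?W \<union> path_image g \<union> path_image c2" using frW by (auto simp: closure_Un_frontier)
  moreover have "p \<notin> path_image g \<union> path_image c2" using p i12 i1g by blast
  moreover have "?W \<subseteq> ?U" using u by blast
  moreover have "p \<notin> ?U" using p inside_no_overlap[of "path_image c1 \<union> path_image g"] by blast
  ultimately show False by blast
qed

lemma outside_chord:
  assumes g_out: "open_arc g \<subseteq> outside (path_image c1 \<union> path_image c2)"
    and T: "connected T" "T \<subseteq> outside (path_image c1 \<union> path_image c2)" "T \<inter> path_image g = {}"
    and p: "p \<in> closure T" "p \<in> path_image c1" "p \<notin> {a,b}"
    and q: "q \<in> closure T" "q \<in> path_image c2" "q \<notin> {a,b}"
  shows False
  using theta[OF g_out]
proof
  assume "path_image c2 \<inter> inside (path_image c1 \<union> path_image g) \<noteq> {}"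
  then show False using outside_chord1[OF g_out _ T p q] by blast
next
  assume "path_image c1 \<inter> inside (path_image c2 \<union> path_image g) \<noteq> {}"
  then show False using three_arcs.outside_chord1[OF sym1, of T q p] g_out T p q by (simp add: Un_commute)
qed

end



fun walk :: "nat \<Rightarrow> (nat \<Rightarrow> real \<Rightarrow> complex) \<Rightarrow> nat \<Rightarrow> nat \<Rightarrow> real \<Rightarrow> complex" where
  "walk N \<gamma> r 0 = \<gamma> r"
| "walk N \<gamma> r (Suc m) = \<gamma> r +++ walk N \<gamma> (Suc r mod N) m"

lemma UN_atMost_Suc_shift: "(\<Union>t\<in>{..Suc m}. F t) = F 0 \<union> (\<Union>t\<in>{..m}. F (Suc t))"
  by (auto simp: atMost_Suc_eq_insert_0)

lemma mod_shift_ne: assumes "r < N" "0 < d" "d < N" shows "(r + d) mod N \<noteq> (r::nat)"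
proof (cases "r + d < N")
  case True then show ?thesis using assms by simp
next
  case False
  from assms have "r + d < 2 * N" by linarith
  with False have "(r + d) mod N = r + d - N" by (simp add: mod_if le_mod_geq)
  with \<open>d < N\<close> False show ?thesis by linarith
qed

locale jcycle =
  fixes N :: nat and Q :: "nat \<Rightarrow> complex" and \<gamma> :: "nat \<Rightarrow> real \<Rightarrow> complex"
  assumes N3: "N \<ge> 3"
    and Qinj: "inj_on Q {..<N}"
    and garc: "\<And>r. r < N \<Longrightarrow> arc (\<gamma> r)"
    and gstart: "\<And>r. r < N \<Longrightarrow> pathstart (\<gamma> r) = Q r"
    and gfin: "\<And>r. r < N \<Longrightarrow> pathfinish (\<gamma> r) = Q (Suc r mod N)"
    and gint: "\<And>r r'. r < N \<Longrightarrow> r' < N \<Longrightarrow> r \<noteq> r' \<Longrightarrow>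
        path_image (\<gamma> r) \<inter> path_image (\<gamma> r') \<subseteq> Q ` ({r, Suc r mod N} \<inter> {r', Suc r' mod N})"
begin

definition "C = (\<Union>r<N. path_image (\<gamma> r))"

lemma walk_props:
  assumes "r < N" "m + 1 < N"
  shows "arc (walk N \<gamma> r m) \<and> pathstart (walk N \<gamma> r m) = Q r \<and>
         pathfinish (walk N \<gamma> r m) = Q ((r + m + 1) mod N) \<and>
         path_image (walk N \<gamma> r m) = (\<Union>t\<in>{..m}. path_image (\<gamma> ((r + t) mod N)))"
  using assms
proof (induction m arbitrary: r)
  case 0
  then show ?case using garc gstart gfin by simp
next
  case (Suc m)
  define r' where "r' = Suc r mod N"
  have r': "r' < N" using Suc.prems r'_def by simp
  have IH: "arc (walk N \<gamma> r' m) \<and> pathstart (walk N \<gamma> r' m) = Q r' \<and>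
         pathfinish (walk N \<gamma> r' m) = Q ((r' + m + 1) mod N) \<and>
         path_image (walk N \<gamma> r' m) = (\<Union>t\<in>{..m}. path_image (\<gamma> ((r' + t) mod N)))"
    using Suc.IH[OF r'] Suc.prems by simp
  have idx: "(r' + t) mod N = (r + Suc t) mod N" for t
    unfolding r'_def by (simp add: mod_add_left_eq)
  have fin: "(r' + m + 1) mod N = (r + Suc m + 1) mod N" using idx[of "m+1"] by (simp add: add.assoc)
  have img: "path_image (walk N \<gamma> r (Suc m)) = (\<Union>t\<in>{..Suc m}. path_image (\<gamma> ((r + t) mod N)))"
  proof -
    have "path_image (walk N \<gamma> r (Suc m)) = path_image (\<gamma> r) \<union> path_image (walk N \<gamma> r' m)"
      using IH Suc.prems gfin by (simp add: path_image_join r'_def)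
    also have "\<dots> = path_image (\<gamma> ((r + 0) mod N)) \<union> (\<Union>t\<in>{..m}. path_image (\<gamma> ((r + Suc t) mod N)))"
      using IH Suc.prems by (simp add: idx)
    also have "\<dots> = (\<Union>t\<in>{..Suc m}. path_image (\<gamma> ((r + t) mod N)))"
      by (simp only: UN_atMost_Suc_shift)
    finally show ?thesis .
  qed
  have inter: "path_image (\<gamma> r) \<inter> path_image (walk N \<gamma> r' m) \<subseteq> {pathstart (walk N \<gamma> r' m)}"
  proof -
    have "path_image (\<gamma> r) \<inter> path_image (\<gamma> ((r + Suc t) mod N)) \<subseteq> {Q r'}" if t: "t \<le> m" for t
    proof -
      define e where "e = (r + Suc t) mod N"
      have eN: "e < N" using Suc.prems e_def by simp
      have ne: "e \<noteq> r" unfolding e_def using Suc.prems t by (intro mod_shift_ne) auto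
      have ne2: "Suc e mod N \<noteq> r"
      proof -
        have "Suc e mod N = (r + Suc (Suc t)) mod N" unfolding e_def by (simp add: mod_Suc_eq)
        also have "\<dots> \<noteq> r" using Suc.prems t by (intro mod_shift_ne) auto
        finally show ?thesis .
      qed
      have "{r, Suc r mod N} \<inter> {e, Suc e mod N} \<subseteq> {r'}" using ne ne2 r'_def by auto
      then show ?thesis using gint[OF Suc.prems(1) eN ne[symmetric]] e_def by blast
    qed
    then show ?thesis using IH by (auto simp: idx)
  qed
  have "arc (walk N \<gamma> r (Suc m))"
    using arc_join[of "\<gamma> r" "walk N \<gamma> r' m"] IH garc[OF Suc.prems(1)] gfin[OF Suc.prems(1)] inter
    by (simp add: r'_def)
  then show ?case using img fin gstart[OF Suc.prems(1)] by (simp add: pathstart_join pathfinish_join IH r'_def[symmetric])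
qed

end

lemma idx_img1: "a < (b::nat) \<Longrightarrow> b \<le> N \<Longrightarrow> (\<lambda>t. (a + t) mod N) ` {..b - a - 1} = {a..<b}"
proof (intro equalityI subsetI)
  fix x assume "a < b" "b \<le> N" "x \<in> (\<lambda>t. (a + t) mod N) ` {..b - a - 1}"
  then show "x \<in> {a..<b}" by auto
next
  fix x assume "a < b" "b \<le> N" "x \<in> {a..<b}"
  then have "x = (a + (x - a)) mod N" "x - a \<in> {..b - a - 1}" by auto
  then show "x \<in> (\<lambda>t. (a + t) mod N) ` {..b - a - 1}" by blast
qed

lemma idx_img2: "a < (b::nat) \<Longrightarrow> b < N \<Longrightarrow> (\<lambda>t. (b + t) mod N) ` {..N - b + a - 1} = {e. e < N \<and> (b \<le> e \<or> e < a)}"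
proof (intro equalityI subsetI)
  fix x assume ab: "a < b" "b < N" "x \<in> (\<lambda>t. (b + t) mod N) ` {..N - b + a - 1}"
  then obtain t where t: "t \<le> N - b + a - 1" "x = (b + t) mod N" by auto
  show "x \<in> {e. e < N \<and> (b \<le> e \<or> e < a)}"
  proof (cases "b + t < N")
    case True then show ?thesis using t by simp
  next
    case False
    have lt: "b + t - N < N" using t ab by linarith
    have "(b + t) mod N = (b + t - N) mod N" using False by (simp add: le_mod_geq)
    then have "x = b + t - N" using t lt by simp
    then show ?thesis using t ab False by auto
  qed
next
  fix x assume ab: "a < b" "b < N" "x \<in> {e. e < N \<and> (b \<le> e \<or> e < a)}"
  show "x \<in> (\<lambda>t. (b + t) mod N) ` {..N - b + a - 1}"
  proof (cases "b \<le> x")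
    case True
    then have "x = (b + (x - b)) mod N" "x - b \<in> {..N - b + a - 1}" using ab by auto
    then show ?thesis by blast
  next
    case False
    then have "x < a" using ab by auto
    then have "x = (b + (x + N - b)) mod N" "x + N - b \<in> {..N - b + a - 1}" using ab by auto
    then show ?thesis by blast
  qed
qed

lemma arith_shared:
  assumes "a < (b::nat)" "b < N" "a \<le> e1" "e1 < b" "e2 < N" "b \<le> e2 \<or> e2 < a"
    "y \<in> {e1, Suc e1 mod N} \<inter> {e2, Suc e2 mod N}"
  shows "y = a \<or> y = b"
proof -
  have s1: "Suc e1 mod N = Suc e1" using assms by simp
  have "y \<in> {e1, Suc e1}" using assms s1 by auto
  then have ya: "a \<le> y" "y \<le> b" using assms by auto
  have "y = e2 \<or> y = Suc e2 mod N" using assms by auto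
  then show ?thesis
  proof
    assume "y = e2" then show ?thesis using ya assms by auto
  next
    assume y: "y = Suc e2 mod N"
    show ?thesis
    proof (cases "Suc e2 < N")
      case True then show ?thesis using y ya assms by auto
    next
      case False then have "Suc e2 = N" using assms by auto
      then have "y = 0" using y by simp
      then show ?thesis using ya by auto
    qed
  qed
qed



lemma UN_img: "(\<Union>t\<in>A. F (f t)) = (\<Union>e\<in>f ` A. F e)" by auto

context jcycle begin

lemma no_interleave:
  assumes abkl: "a < k" "k < b" "b < l" "l < N"
    and g: "arc g" "pathstart g = Q a" "pathfinish g = Q b" "path_image g \<inter> C \<subseteq> {Q a, Q b}"
    and h: "arc h" "Q k \<in> path_image h" "Q l \<in> path_image h"
    and gh: "path_image g \<inter> path_image h = {}"
    and side: "(open_arc g \<subseteq> inside C \<and> open_arc h \<subseteq> inside C) \<or>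
               (open_arc g \<subseteq> outside C \<and> open_arc h \<subseteq> outside C)"
  shows False
proof -
  define c1 where "c1 = walk N \<gamma> a (b - a - 1)"
  define c2 where "c2 = reversepath (walk N \<gamma> b (N - b + a - 1))"
  define E1 where "E1 = {a..<b}"
  define E2 where "E2 = {e. e < N \<and> (b \<le> e \<or> e < a)}"
  have w1: "arc c1 \<and> pathstart c1 = Q a \<and> pathfinish c1 = Q ((a + (b - a - 1) + 1) mod N) \<and>
         path_image c1 = (\<Union>t\<in>{..b - a - 1}. path_image (\<gamma> ((a + t) mod N)))"
    unfolding c1_def using abkl by (intro walk_props) auto
  have w2: "arc (walk N \<gamma> b (N - b + a - 1)) \<and> pathstart (walk N \<gamma> b (N - b + a - 1)) = Q b \<and>
         pathfinish (walk N \<gamma> b (N - b + a - 1)) = Q ((b + (N - b + a - 1) + 1) mod N) \<and>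
         path_image (walk N \<gamma> b (N - b + a - 1)) = (\<Union>t\<in>{..N - b + a - 1}. path_image (\<gamma> ((b + t) mod N)))"
    using abkl by (intro walk_props) auto
  have e1: "(a + (b - a - 1) + 1) mod N = b" using abkl by simp
  have e2: "(b + (N - b + a - 1) + 1) mod N = a" using abkl by simp
  have img1: "path_image c1 = (\<Union>e\<in>E1. path_image (\<gamma> e))"
  proof -
    have "path_image c1 = (\<Union>t\<in>{..b - a - 1}. path_image (\<gamma> ((a + t) mod N)))" using w1 by blast
    also have "\<dots> = (\<Union>e\<in>(\<lambda>t. (a + t) mod N) ` {..b - a - 1}. path_image (\<gamma> e))" by (rule UN_img)
    also have "\<dots> = (\<Union>e\<in>E1. path_image (\<gamma> e))" using idx_img1[of a b N] abkl unfolding E1_def by simp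
    finally show ?thesis .
  qed
  have img2: "path_image c2 = (\<Union>e\<in>E2. path_image (\<gamma> e))"
  proof -
    have "path_image c2 = (\<Union>t\<in>{..N - b + a - 1}. path_image (\<gamma> ((b + t) mod N)))" using w2 by (simp add: c2_def path_image_reversepath)
    also have "\<dots> = (\<Union>e\<in>(\<lambda>t. (b + t) mod N) ` {..N - b + a - 1}. path_image (\<gamma> e))" by (rule UN_img)
    also have "\<dots> = (\<Union>e\<in>E2. path_image (\<gamma> e))" using idx_img2[of a b N] abkl unfolding E2_def by simp
    finally show ?thesis .
  qed
  have arcs: "arc c1" "arc c2" using w1 w2 by (auto simp: c2_def arc_reversepath)
  have ends: "pathstart c1 = Q a" "pathfinish c1 = Q b" "pathstart c2 = Q a" "pathfinish c2 = Q b"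
    using w1 w2 e1 e2 by (auto simp: c2_def)
  have Qab: "Q a \<noteq> Q b" using Qinj abkl by (metis inj_onD lessThan_iff order.strict_trans order_less_irrefl)
  have CU: "C = path_image c1 \<union> path_image c2"
  proof -
    have "{..<N} = E1 \<union> E2" using abkl unfolding E1_def E2_def by auto
    then show ?thesis unfolding C_def img1 img2 by blast
  qed
  have ends_in: "Q a \<in> path_image c1" "Q b \<in> path_image c1" "Q a \<in> path_image c2" "Q b \<in> path_image c2"
    using ends by (metis pathstart_in_path_image pathfinish_in_path_image)+
  have i12: "path_image c1 \<inter> path_image c2 = {Q a, Q b}"
  proof
    show "path_image c1 \<inter> path_image c2 \<subseteq> {Q a, Q b}"
    proof
      fix x assume "x \<in> path_image c1 \<inter> path_image c2"
      then obtain e1 e2 where ee: "e1 \<in> E1" "e2 \<in> E2" "x \<in> path_image (\<gamma> e1)" "x \<in> path_image (\<gamma> e2)"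
        unfolding img1 img2 by blast
      have ne: "e1 \<noteq> e2" using ee unfolding E1_def E2_def by auto
      have "x \<in> Q ` ({e1, Suc e1 mod N} \<inter> {e2, Suc e2 mod N})"
        using gint[of e1 e2] ee ne abkl unfolding E1_def E2_def by auto
      then obtain y where "y \<in> {e1, Suc e1 mod N} \<inter> {e2, Suc e2 mod N}" "x = Q y" by blast
      then show "x \<in> {Q a, Q b}" using arith_shared[of a b N e1 e2 y] ee abkl unfolding E1_def E2_def by auto
    qed
  qed (use ends_in in auto)
  have i1g: "path_image c1 \<inter> path_image g = {Q a, Q b}"
    using g(4) CU ends_in g(2,3) by (auto, metis pathstart_in_path_image, metis pathfinish_in_path_image)
  have i2g: "path_image c2 \<inter> path_image g = {Q a, Q b}"
    using g(4) CU ends_in g(2,3) by (auto, metis pathstart_in_path_image, metis pathfinish_in_path_image)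
  interpret TA: three_arcs c1 c2 g "Q a" "Q b"
    using arcs ends g Qab i12 i1g i2g by unfold_locales auto
  have kin: "Q k \<in> path_image c1"
    unfolding img1 E1_def using abkl gstart[of k] pathstart_in_path_image[of "\<gamma> k"] by force
  have lin: "Q l \<in> path_image c2"
    unfolding img2 E2_def using abkl gstart[of l] pathstart_in_path_image[of "\<gamma> l"] by force
  have knot: "Q k \<notin> {Q a, Q b}" and lnot: "Q l \<notin> {Q a, Q b}"
    using Qinj abkl unfolding inj_on_def by (auto, (metis lessThan_iff order.strict_trans order_less_irrefl)+)
  have T: "connected (open_arc h)" "open_arc h \<inter> path_image g = {}"
    using open_arc_connected[OF h(1)] gh open_arc_subset by auto
  have cl: "Q k \<in> closure (open_arc h)" "Q l \<in> closure (open_arc h)"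
    using path_image_closure_open_arc[OF h(1)] h by auto
  from side show False
  proof
    assume "open_arc g \<subseteq> inside C \<and> open_arc h \<subseteq> inside C"
    then show False using TA.inside_chord[of "open_arc h" "Q k" "Q l"] T cl kin lin knot lnot CU by auto
  next
    assume "open_arc g \<subseteq> outside C \<and> open_arc h \<subseteq> outside C"
    then show False using TA.outside_chord[of "open_arc h" "Q k" "Q l"] T cl kin lin knot lnot CU by auto
  qed
qed

end



definition cross :: "complex \<Rightarrow> complex \<Rightarrow> real" where
  "cross u w = Re u * Im w - Im u * Re w"

definition orient :: "complex \<Rightarrow> complex \<Rightarrow> complex \<Rightarrow> real" where
  "orient a b c = cross (b - a) (c - a)"

definition Pp :: "(nat \<Rightarrow> real) \<Rightarrow> (nat \<Rightarrow> bool) \<Rightarrow> nat \<Rightarrow> complex" where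
  "Pp y s i = (if s i then pt y i else qt y i)"

definition sg :: "bool \<Rightarrow> real" where "sg b = (if b then 1 else -1)"

lemma Re_Pp[simp]: "Re (Pp y s i) = real i" by (simp add: Pp_def pt_def qt_def)

lemma Pp_in_H: "1 \<le> i \<Longrightarrow> i \<le> n \<Longrightarrow> Pp y s i \<in> Hset y n"
  by (auto simp: Pp_def Hset_def)

lemma G1:
  assumes ex: "exploding_double_chain y" and j: "3 \<le> j"
    and a: "a \<in> Hset y (j - 1)" and b: "b \<in> Hset y (j - 1)" and ab: "Re a < Re b"
  shows "0 < orient a b (Pp y s j) * sg (s j)"
proof -
  have "\<forall>n\<ge>2. y (Suc n) > 0 \<and>
        (\<forall>a\<in>Hset y n. \<forall>b\<in>Hset y n. a \<noteq> b \<longrightarrow> Re a \<noteq> Re b \<longrightarrow>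
           \<bar>Im a + (Im b - Im a) * (real (Suc n) - Re a) / (Re b - Re a)\<bar> < y (Suc n))"
    using ex by (simp add: exploding_double_chain_def)
  then have "\<bar>Im a + (Im b - Im a) * (real (Suc (j - 1)) - Re a) / (Re b - Re a)\<bar> < y (Suc (j - 1))"
  proof -
    assume H: "\<forall>n\<ge>2. y (Suc n) > 0 \<and>
        (\<forall>a\<in>Hset y n. \<forall>b\<in>Hset y n. a \<noteq> b \<longrightarrow> Re a \<noteq> Re b \<longrightarrow>
           \<bar>Im a + (Im b - Im a) * (real (Suc n) - Re a) / (Re b - Re a)\<bar> < y (Suc n))"
    have "j - 1 \<ge> 2" using j by simp
    moreover have "a \<noteq> b" "Re a \<noteq> Re b" using ab by auto
    ultimately show ?thesis using H a b by blast
  qed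
  moreover have "Suc (j - 1) = j" using j by simp
  ultimately have h: "\<bar>Im a + (Im b - Im a) * (real j - Re a) / (Re b - Re a)\<bar> < y j" by simp
  define D where "D = Re b - Re a"
  have D: "D > 0" using ab D_def by simp
  have eq: "Im a + (Im b - Im a) * (real j - Re a) / (Re b - Re a) = (Im a * D + (Im b - Im a) * (real j - Re a)) / D"
    using D by (simp add: D_def field_simps)
  have "\<bar>Im a * D + (Im b - Im a) * (real j - Re a)\<bar> < y j * D"
    using h D unfolding eq by (simp add: abs_divide divide_less_eq)
  then have h1: "Im a * D + (Im b - Im a) * (real j - Re a) < y j * D"
    and h2: "- (y j * D) < Im a * D + (Im b - Im a) * (real j - Re a)" by linarith+
  show ?thesis
    using h1 h2 unfolding orient_def cross_def Pp_def pt_def qt_def sg_def D_def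
    by (auto simp: algebra_simps)
qed




lemma seg_param: "x \<in> closed_segment a b \<Longrightarrow> \<exists>u. 0 \<le> u \<and> u \<le> 1 \<and> x = a + u *\<^sub>R (b - a)"
  unfolding closed_segment_def by (auto simp: algebra_simps)

lemma orient_on_seg: assumes "x \<in> closed_segment a b" shows "orient a b x = 0"
proof -
  obtain u where u: "x = a + u *\<^sub>R (b - a)" using seg_param[OF assms] by blast
  show ?thesis unfolding u by (simp add: orient_def cross_def algebra_simps)
qed

lemma Re_on_seg: "x \<in> closed_segment a b \<Longrightarrow> min (Re a) (Re b) \<le> Re x \<and> Re x \<le> max (Re a) (Re b)"
proof (drule seg_param, elim exE conjE)
  fix u assume u: "0 \<le> u" "u \<le> 1" "x = a + u *\<^sub>R (b - a)"
  have "Re x = (1 - u) * Re a + u * Re b" unfolding u(3) by (simp add: algebra_simps)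
  moreover have "(1 - u) * Re a + u * Re b \<le> max (Re a) (Re b)"
    using u convex_bound_le[of "Re a" "max (Re a) (Re b)" "Re b" "1-u" u] by auto
  moreover have "min (Re a) (Re b) \<le> (1 - u) * Re a + u * Re b"
    using u convex_bound_le[of "- Re a" "- min (Re a) (Re b)" "- Re b" "1-u" u] by (auto simp: algebra_simps)
  ultimately show ?thesis by simp
qed

lemma orient_affine: "orient a b (c + w *\<^sub>R (d - c)) = (1 - w) * orient a b c + w * orient a b d"
  by (simp add: orient_def cross_def algebra_simps)

lemma seg_disjoint_side:
  assumes "0 < orient a b c * t" "0 < orient a b d * t"
  shows "closed_segment a b \<inter> closed_segment c d = {}"
proof (rule ccontr)
  assume "closed_segment a b \<inter> closed_segment c d \<noteq> {}"
  then obtain x where x: "x \<in> closed_segment a b" "x \<in> closed_segment c d" by blast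
  have o: "orient a b x = 0" using x(1) by (rule orient_on_seg)
  obtain w where w: "0 \<le> w" "w \<le> 1" "x = c + w *\<^sub>R (d - c)" using seg_param[OF x(2)] by blast
  have "orient a b x * t = (1 - w) * (orient a b c * t) + w * (orient a b d * t)"
    unfolding w(3) orient_affine by (simp add: algebra_simps)
  moreover have "0 < (1 - w) * (orient a b c * t) + w * (orient a b d * t)"
  proof (cases "w = 0")
    case True then show ?thesis using assms by simp
  next
    case False then have "0 < w" using w by simp
    then have "0 < w * (orient a b d * t)" using assms by simp
    moreover have "0 \<le> (1 - w) * (orient a b c * t)" using assms w by simp
    ultimately show ?thesis by linarith
  qed
  ultimately show False using o by simp
qed

lemma seg_common_end:
  assumes "orient a b c \<noteq> 0"
  shows "closed_segment a c \<inter> closed_segment b c \<subseteq> {c}"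
proof
  fix x assume "x \<in> closed_segment a c \<inter> closed_segment b c"
  then have x: "x \<in> closed_segment c a" "x \<in> closed_segment c b" by (auto simp: closed_segment_commute)
  obtain u where u: "0 \<le> u" "u \<le> 1" "x = c + u *\<^sub>R (a - c)" using seg_param[OF x(1)] by blast
  obtain v where v: "0 \<le> v" "v \<le> 1" "x = c + v *\<^sub>R (b - c)" using seg_param[OF x(2)] by blast
  show "x \<in> {c}"
  proof (cases "u = 0")
    case True then show ?thesis using u by simp
  next
    case False
    have e: "u *\<^sub>R (a - c) = v *\<^sub>R (b - c)" using u v by simp
    have "u * Re (a - c) = v * Re (b - c)" "u * Im (a - c) = v * Im (b - c)"
      using arg_cong[OF e, of Re] arg_cong[OF e, of Im] by simp_all
    then have h: "u * Re (a - c) = v * Re (b - c)" "u * Im (a - c) = v * Im (b - c)" .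
    have oe: "orient a b c = Re (a - c) * Im (b - c) - Im (a - c) * Re (b - c)"
      unfolding orient_def cross_def by (simp add: algebra_simps)
    have "u * orient a b c = (u * Re (a - c)) * Im (b - c) - (u * Im (a - c)) * Re (b - c)"
      unfolding oe by (simp add: algebra_simps)
    also have "\<dots> = (v * Re (b - c)) * Im (b - c) - (v * Im (b - c)) * Re (b - c)" unfolding h ..
    also have "\<dots> = 0" by (simp add: algebra_simps)
    finally have "u * orient a b c = 0" .
    then show ?thesis using False assms by simp
  qed
qed




lemma orient_swap: "orient a b c = - orient a c b"
  by (simp add: orient_def cross_def algebra_simps)
lemma orient_cyc: "orient a b c = orient b c a"
  by (simp add: orient_def cross_def algebra_simps)

lemma G1':
  assumes ex: "exploding_double_chain y" and "3 \<le> m" "1 \<le> p" "p < q" "q < m"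
  shows "0 < orient (Pp y s p) (Pp y s q) (Pp y s m) * sg (s m)"
  using assms by (intro G1) (auto intro!: Pp_in_H)

lemma sg_neg: "s1 \<noteq> s2 \<Longrightarrow> sg s1 = - sg s2" by (auto simp: sg_def)

lemma geo_pair:
  assumes ex: "exploding_double_chain y"
    and ij: "1 \<le> i" "i < j" and kl: "1 \<le> k" "k < l" and jl: "j \<le> l" and ne: "(i,j) \<noteq> (k,l)"
    and lam: "s j = s l \<Longrightarrow> i < k \<Longrightarrow> k < j \<Longrightarrow> j < l \<Longrightarrow> False"
  shows "closed_segment (Pp y s i) (Pp y s j) \<inter> closed_segment (Pp y s k) (Pp y s l)
          \<subseteq> Pp y s ` ({i,j} \<inter> {k,l})"
proof -
  let ?P = "Pp y s"
  show ?thesis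
  proof (cases "j = l")
    case True
    then have ik: "i \<noteq> k" using ne by auto
    have j3: "3 \<le> j" using ij kl ik True by linarith
    have "closed_segment (?P i) (?P j) \<inter> closed_segment (?P k) (?P j) \<subseteq> {?P j}"
    proof (cases "i < k")
      case True
      have "orient (?P i) (?P k) (?P j) \<noteq> 0"
        using G1'[OF ex j3 ij(1) True, of s] kl \<open>j = l\<close> by auto
      then show ?thesis by (rule seg_common_end)
    next
      case False
      then have "k < i" using ik by simp
      then have "orient (?P k) (?P i) (?P j) \<noteq> 0"
        using G1'[OF ex j3 kl(1) \<open>k < i\<close>, of s] ij by auto
      then show ?thesis using seg_common_end by blast
    qed
    then show ?thesis using True by auto
  next
    case False
    then have jl': "j < l" using jl by simp
    have l3: "3 \<le> l" using ij jl' by linarith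
    have oijl: "0 < orient (?P i) (?P j) (?P l) * sg (s l)" using G1'[OF ex l3 ij jl'] .
    consider "k = i" | "k = j" | "j < k" | "k < i" | "i < k" "k < j" by linarith
    then show ?thesis
    proof cases
      case 1
      have "orient (?P j) (?P l) (?P i) \<noteq> 0" using oijl orient_cyc[of "?P i"] by auto
      then have "closed_segment (?P j) (?P i) \<inter> closed_segment (?P l) (?P i) \<subseteq> {?P i}"
        by (rule seg_common_end)
      then show ?thesis using 1 by (auto simp: closed_segment_commute)
    next
      case 2
      have "orient (?P i) (?P l) (?P j) \<noteq> 0" using oijl orient_swap[of "?P i" "?P l"] by auto
      then have "closed_segment (?P i) (?P j) \<inter> closed_segment (?P l) (?P j) \<subseteq> {?P j}"
        by (rule seg_common_end)
      then show ?thesis using 2 by (auto simp: closed_segment_commute)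
    next
      case 3
      have "closed_segment (?P i) (?P j) \<inter> closed_segment (?P k) (?P l) = {}"
      proof (rule ccontr)
        assume "closed_segment (?P i) (?P j) \<inter> closed_segment (?P k) (?P l) \<noteq> {}"
        then obtain x where x: "x \<in> closed_segment (?P i) (?P j)" "x \<in> closed_segment (?P k) (?P l)" by blast
        have "Re x \<le> real j" using Re_on_seg[OF x(1)] ij by simp
        moreover have "real k \<le> Re x" using Re_on_seg[OF x(2)] kl by simp
        ultimately show False using 3 by simp
      qed
      then show ?thesis by simp
    next
      case 4
      have a1: "0 < orient (?P k) (?P l) (?P i) * (- sg (s l))"
        using G1'[OF ex l3 kl(1) 4, of s] ij jl' orient_swap[of "?P k" "?P l" "?P i"] by simp
      have a2: "0 < orient (?P k) (?P l) (?P j) * (- sg (s l))"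
        using G1'[OF ex l3 kl(1), of j s] 4 ij jl' orient_swap[of "?P k" "?P l" "?P j"] by simp
      have "closed_segment (?P k) (?P l) \<inter> closed_segment (?P i) (?P j) = {}"
        by (rule seg_disjoint_side[OF a1 a2])
      then show ?thesis by auto
    next
      case 5
      have sjl: "s j \<noteq> s l" using lam 5 jl' by blast
      have j3: "3 \<le> j" using ij 5 by linarith
      have "0 < orient (?P i) (?P k) (?P j) * sg (s j)" using G1'[OF ex j3 ij(1) 5(1) 5(2)] .
      then have a1: "0 < orient (?P i) (?P j) (?P k) * sg (s l)"
        using orient_swap[of "?P i" "?P j" "?P k"] sg_neg[OF sjl] by simp
      have "closed_segment (?P i) (?P j) \<inter> closed_segment (?P k) (?P l) = {}"
        by (rule seg_disjoint_side[OF a1 oijl])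
      then show ?thesis by simp
    qed
  qed
qed

lemma geo_vertex:
  assumes ex: "exploding_double_chain y" and ij: "1 \<le> i" "i < j" and m: "1 \<le> m"
    and x: "Pp y s m \<in> closed_segment (Pp y s i) (Pp y s j)"
  shows "m = i \<or> m = j"
proof (rule ccontr)
  assume nm: "\<not> (m = i \<or> m = j)"
  have "real i \<le> real m" "real m \<le> real j" using Re_on_seg[OF x] ij by auto
  then have im: "i < m" "m < j" using nm by auto
  have j3: "3 \<le> j" using ij im by linarith
  have "0 < orient (Pp y s i) (Pp y s m) (Pp y s j) * sg (s j)" using G1'[OF ex j3 ij(1) im] .
  moreover have "orient (Pp y s i) (Pp y s j) (Pp y s m) = 0" by (rule orient_on_seg[OF x])
  ultimately show False using orient_swap[of "Pp y s i" "Pp y s j" "Pp y s m"] by simp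
qed

lemma Pp_inj: "inj (Pp y s)"
  by (rule injI) (metis Re_Pp of_nat_eq_iff)




lemma orient_arc:
  assumes "arc g" "{pathstart g, pathfinish g} = {p, q}" "p \<noteq> q"
  defines "g' \<equiv> (if pathstart g = p then g else reversepath g)"
  shows "arc g' \<and> pathstart g' = p \<and> pathfinish g' = q \<and> path_image g' = path_image g \<and> open_arc g' = open_arc g"
proof (cases "pathstart g = p")
  case True
  then have "pathfinish g = q" using assms(2,3) by (metis doubleton_eq_iff)
  then show ?thesis using True assms by simp
next
  case False
  then have "pathstart g = q" "pathfinish g = p" using assms(2,3) by (metis doubleton_eq_iff insertI1 insert_commute)+
  then show ?thesis using False assms
    by (auto simp: arc_reversepath path_image_reversepath open_arc_def)
qed

lemma nxt2_ne: "3 \<le> (n::nat) \<Longrightarrow> r < n \<Longrightarrow> Suc (Suc r mod n) mod n \<noteq> r"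
  using mod_shift_ne[of r n 2] by (simp add: mod_Suc_eq)

lemma nxt_ne: "3 \<le> (n::nat) \<Longrightarrow> r < n \<Longrightarrow> Suc r mod n \<noteq> r"
  using mod_shift_ne[of r n 1] by simp




theorem theorem1:
  fixes y :: "nat \<Rightarrow> real" and n :: nat
    and V :: "'v set" and E E' :: "'v set set"
    and pos :: "'v \<Rightarrow> complex" and c :: "'v set \<Rightarrow> real \<Rightarrow> complex"
    and v :: "nat \<Rightarrow> 'v"
  assumes "n \<ge> 3"
    and "exploding_double_chain y"
    and "simple_graph V E'"
    and "card V = n"
    and "plane_drawing V E pos c"
    and "E' \<subseteq> E"
    and "one_sided_ham_cycle V E pos c n v"
  shows "\<exists>pos'. (\<forall>i\<in>{1..n}. pos' (v i) = pt y i \<or> pos' (v i) = qt y i) \<and>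
                straight_line_plane V E' pos'"
proof -
  have n3: "3 \<le> n" using assms(1) .
  note pd = assms(5)[unfolded plane_drawing_def]
  have pinj: "inj_on pos V" using pd[THEN conjunct2, THEN conjunct1] .
  have parc: "\<And>e. e \<in> E \<Longrightarrow> arc (c e) \<and> {pathstart (c e), pathfinish (c e)} = pos ` e"
    using pd[THEN conjunct2, THEN conjunct2, THEN conjunct1] by blast
  have pint: "\<And>e f. e \<in> E \<Longrightarrow> f \<in> E \<Longrightarrow> e \<noteq> f \<Longrightarrow> path_image (c e) \<inter> path_image (c f) \<subseteq> pos ` (e \<inter> f)"
    using pd[THEN conjunct2, THEN conjunct2, THEN conjunct2, THEN conjunct2] by blast
  note os = assms(7)[unfolded one_sided_ham_cycle_def hamiltonian_cycle_def Let_def]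
  have bij: "bij_betw v {1..n} V" using os[THEN conjunct1, THEN conjunct2, THEN conjunct1] .
  have cycE: "cycle_edges v n \<subseteq> E" using os[THEN conjunct1, THEN conjunct2, THEN conjunct2] .
  define Cc where "Cc = (\<Union>e\<in>cycle_edges v n. path_image (c e))"
  have side: "\<And>j. j \<in> {2..n} \<Longrightarrow>
        (\<forall>i\<in>{1..<j}. {v i, v j} \<in> E - cycle_edges v n \<longrightarrow> open_arc (c {v i, v j}) \<subseteq> inside Cc) \<or>
        (\<forall>i\<in>{1..<j}. {v i, v j} \<in> E - cycle_edges v n \<longrightarrow> open_arc (c {v i, v j}) \<subseteq> outside Cc)"
    using os[THEN conjunct2, THEN conjunct2] unfolding Cc_def by blast
  have vinj: "inj_on v {1..n}" using bij bij_betw_def by blast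
  have vV: "\<And>i. i \<in> {1..n} \<Longrightarrow> v i \<in> V" using bij bij_betwE by blast
  have veq: "\<And>i j. i \<in> {1..n} \<Longrightarrow> j \<in> {1..n} \<Longrightarrow> v i = v j \<longleftrightarrow> i = j"
    using inj_on_eq_iff[OF vinj] by blast
  have posveq: "\<And>i j. i \<in> {1..n} \<Longrightarrow> j \<in> {1..n} \<Longrightarrow> pos (v i) = pos (v j) \<longleftrightarrow> i = j"
  proof -
    fix i j assume ij: "i \<in> {1..n}" "j \<in> {1..n}"
    show "pos (v i) = pos (v j) \<longleftrightarrow> i = j" using inj_on_eq_iff[OF pinj vV[OF ij(1)] vV[OF ij(2)]] veq[OF ij] by simp
  qed
  define s where "s j = (\<forall>i\<in>{1..<j}. {v i, v j} \<in> E - cycle_edges v n \<longrightarrow> open_arc (c {v i, v j}) \<subseteq> inside Cc)" for j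
  have s_out: "\<And>j i. j \<in> {2..n} \<Longrightarrow> \<not> s j \<Longrightarrow> i \<in> {1..<j} \<Longrightarrow> {v i, v j} \<in> E - cycle_edges v n \<Longrightarrow>
      open_arc (c {v i, v j}) \<subseteq> outside Cc"
    using side unfolding s_def by blast
  define Q where "Q r = pos (v (Suc r))" for r
  define ed where "ed r = {v (Suc r), v (Suc (Suc r mod n))}" for r
  define \<gamma> where "\<gamma> r = (if pathstart (c (ed r)) = Q r then c (ed r) else reversepath (c (ed r)))" for r
  have ed_cyc: "ed r \<in> cycle_edges v n" if r: "r < n" for r
  proof (cases "Suc r < n")
    case True then have "ed r = {v (Suc r), v (Suc (Suc r))}" by (simp add: ed_def)
    then show ?thesis using True unfolding cycle_edges_def by (auto intro!: exI[of _ "Suc r"])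
  next
    case False then have "Suc r = n" using r by simp
    then have "ed r = {v n, v 1}" by (simp add: ed_def)
    then show ?thesis unfolding cycle_edges_def by blast
  qed
  have cyc_ed: "cycle_edges v n = ed ` {..<n}"
  proof
    show "ed ` {..<n} \<subseteq> cycle_edges v n" using ed_cyc by blast
    show "cycle_edges v n \<subseteq> ed ` {..<n}"
    proof
      fix d assume "d \<in> cycle_edges v n"
      then consider i where "1 \<le> i" "i < n" "d = {v i, v (Suc i)}" | "d = {v n, v 1}"
        unfolding cycle_edges_def by blast
      then show "d \<in> ed ` {..<n}"
      proof cases
        case 1
        then have "d = ed (i - 1)" by (simp add: ed_def)
        then show ?thesis using 1 by auto
      next
        case 2
        then have "d = ed (n - 1)" using n3 by (simp add: ed_def insert_commute)
        then show ?thesis using n3 by auto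
      qed
    qed
  qed
  have edE: "\<And>r. r < n \<Longrightarrow> ed r \<in> E" using ed_cyc cycE by blast
  have Qr: "\<And>r. pos ` ed r = {Q r, Q (Suc r mod n)}" by (simp add: ed_def Q_def)
  have Qinj: "inj_on Q {..<n}"
    unfolding inj_on_def Q_def
  proof (intro ballI impI)
    fix r r' assume "r \<in> {..<n}" "r' \<in> {..<n}" "pos (v (Suc r)) = pos (v (Suc r'))"
    then show "r = r'" using posveq[of "Suc r" "Suc r'"] by simp
  qed
  have nlt: "\<And>r. Suc r mod n < n" using n3 by simp
  have gprops: "arc (\<gamma> r) \<and> pathstart (\<gamma> r) = Q r \<and> pathfinish (\<gamma> r) = Q (Suc r mod n) \<and>
      path_image (\<gamma> r) = path_image (c (ed r))" if r: "r < n" for r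
  proof -
    have "Q r \<noteq> Q (Suc r mod n)" using inj_on_eq_iff[OF Qinj, of r "Suc r mod n"] nxt_ne[OF n3 r] r nlt by simp
    then show ?thesis
      using orient_arc[of "c (ed r)" "Q r" "Q (Suc r mod n)"] parc[OF edE[OF r]] Qr unfolding \<gamma>_def by auto
  qed
  have vSinj: "inj_on (\<lambda>t. v (Suc t)) {..<n}" unfolding inj_on_def using veq by simp
  have ed_img: "ed r = (\<lambda>t. v (Suc t)) ` {r, Suc r mod n}" for r by (simp add: ed_def)
  have ed_int: "ed r \<inter> ed r' = (\<lambda>t. v (Suc t)) ` ({r, Suc r mod n} \<inter> {r', Suc r' mod n})"
    if "r < n" "r' < n" for r r'
    unfolding ed_img using that n3 by (intro inj_on_image_Int[OF vSinj, symmetric]) auto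
  have ed_ne: "ed r \<noteq> ed r'" if rr: "r < n" "r' < n" "r \<noteq> r'" for r r'
  proof
    assume "ed r = ed r'"
    then have "{r, Suc r mod n} = {r', Suc r' mod n}"
      unfolding ed_img using rr nlt inj_on_image_eq_iff[OF vSinj, of "{r, Suc r mod n}" "{r', Suc r' mod n}"] by simp
    then have "r = Suc r' mod n" "r' = Suc r mod n" using rr by (auto simp: doubleton_eq_iff)
    then show False using nxt2_ne[OF n3 rr(2)] by simp
  qed
  interpret J: jcycle n Q \<gamma>
  proof
    show "3 \<le> n" by (rule n3)
    show "inj_on Q {..<n}" by (rule Qinj)
    show "\<And>r. r < n \<Longrightarrow> arc (\<gamma> r)" "\<And>r. r < n \<Longrightarrow> pathstart (\<gamma> r) = Q r"
      "\<And>r. r < n \<Longrightarrow> pathfinish (\<gamma> r) = Q (Suc r mod n)" using gprops by auto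
    fix r r' assume rr: "r < n" "r' < n" "r \<noteq> r'"
    have "path_image (\<gamma> r) \<inter> path_image (\<gamma> r') \<subseteq> pos ` (ed r \<inter> ed r')"
      using gprops rr pint[OF edE edE ed_ne] by simp
    also have "\<dots> = Q ` ({r, Suc r mod n} \<inter> {r', Suc r' mod n})"
      unfolding ed_int[OF rr(1,2)] image_image Q_def ..
    finally show "path_image (\<gamma> r) \<inter> path_image (\<gamma> r') \<subseteq> Q ` ({r, Suc r mod n} \<inter> {r', Suc r' mod n})" .
  qed
  have CC: "J.C = Cc" unfolding J.C_def Cc_def cyc_ed using gprops by auto

  have lam: False if ikjl: "1 \<le> i" "i < k" "k < j" "j < l" "l \<le> n"
    and eE: "{v i, v j} \<in> E" and fE: "{v k, v l} \<in> E" and sjl: "s j = s l" for i k j l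
  proof -
    let ?e = "{v i, v j}" and ?f = "{v k, v l}"
    have idx: "i \<in> {1..n}" "j \<in> {1..n}" "k \<in> {1..n}" "l \<in> {1..n}" using ikjl by auto
    have nc: "{v a, v b} \<notin> cycle_edges v n" if ab: "a \<in> {1..n}" "b \<in> {1..n}" "Suc a < b" "b < n" for a b
    proof
      assume "{v a, v b} \<in> cycle_edges v n"
      then consider m where "1 \<le> m" "m < n" "{v a, v b} = {v m, v (Suc m)}" | "{v a, v b} = {v n, v 1}"
        unfolding cycle_edges_def by blast
      then show False
      proof cases
        case 1
        then have "(v a = v m \<and> v b = v (Suc m)) \<or> (v a = v (Suc m) \<and> v b = v m)" by (auto simp: doubleton_eq_iff)
        then have "(a = m \<and> b = Suc m) \<or> (a = Suc m \<and> b = m)" using veq ab 1 by auto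
        then show False using ab by auto
      next
        case 2
        then have "v n = v a \<or> v n = v b" by (auto simp: doubleton_eq_iff)
        then have "n = a \<or> n = b" using veq ab n3 by auto
        then show False using ab by auto
      qed
    qed
    have enc: "?e \<notin> cycle_edges v n" using nc[of i j] idx ikjl by auto
    have fnc: "?f \<notin> cycle_edges v n"
    proof
      assume "?f \<in> cycle_edges v n"
      then consider m where "1 \<le> m" "m < n" "?f = {v m, v (Suc m)}" | "?f = {v n, v 1}"
        unfolding cycle_edges_def by blast
      then show False
      proof cases
        case 1
        then have "(v k = v m \<and> v l = v (Suc m)) \<or> (v k = v (Suc m) \<and> v l = v m)" by (auto simp: doubleton_eq_iff)
        then have "(k = m \<and> l = Suc m) \<or> (k = Suc m \<and> l = m)" using veq idx 1 by auto
        then show False using ikjl by auto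
      next
        case 2
        then have "v 1 = v k \<or> v 1 = v l" by (auto simp: doubleton_eq_iff)
        then have "1 = k \<or> 1 = l" using veq idx n3 by auto
        then show False using ikjl by auto
      qed
    qed
    have sides: "(open_arc (c ?e) \<subseteq> inside Cc \<and> open_arc (c ?f) \<subseteq> inside Cc) \<or>
                 (open_arc (c ?e) \<subseteq> outside Cc \<and> open_arc (c ?f) \<subseteq> outside Cc)"
    proof (cases "s j")
      case True
      then have "s l" using sjl by simp
      then show ?thesis using True eE fE enc fnc ikjl unfolding s_def by auto
    next
      case False
      then have "\<not> s l" using sjl by simp
      have j2: "j \<in> {2..n}" "l \<in> {2..n}" using ikjl by auto
      show ?thesis using s_out[OF j2(1) False, of i] s_out[OF j2(2) \<open>\<not> s l\<close>, of k] eE fE enc fnc ikjl by auto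
    qed
    have Qs: "Q (i - 1) = pos (v i)" "Q (j - 1) = pos (v j)" "Q (k - 1) = pos (v k)" "Q (l - 1) = pos (v l)"
      using ikjl by (auto simp: Q_def)
    have pij: "pos (v i) \<noteq> pos (v j)" using posveq idx ikjl by auto
    define g where "g = (if pathstart (c ?e) = pos (v i) then c ?e else reversepath (c ?e))"
    have g: "arc g \<and> pathstart g = pos (v i) \<and> pathfinish g = pos (v j) \<and> path_image g = path_image (c ?e) \<and>
        open_arc g = open_arc (c ?e)"
      unfolding g_def using orient_arc[of "c ?e" "pos (v i)" "pos (v j)"] parc[OF eE] pij by auto
    have gC: "path_image g \<inter> J.C \<subseteq> {Q (i - 1), Q (j - 1)}"
    proof -
      have "path_image (c ?e) \<inter> path_image (c d) \<subseteq> {pos (v i), pos (v j)}" if d: "d \<in> cycle_edges v n" for d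
      proof -
        have "d \<noteq> ?e" using d enc by blast
        then have "path_image (c ?e) \<inter> path_image (c d) \<subseteq> pos ` (?e \<inter> d)" using pint[OF eE] d cycE by blast
        then show ?thesis by blast
      qed
      then show ?thesis using g unfolding CC Cc_def Qs by blast
    qed
    have ef: "?e \<noteq> ?f" using veq idx ikjl by (auto simp: doubleton_eq_iff)
    have efI: "?e \<inter> ?f = {}" using veq idx ikjl by auto
    have gh: "path_image g \<inter> path_image (c ?f) = {}" using pint[OF eE fE ef] efI g by auto
    have harc: "arc (c ?f)" and hends: "{pathstart (c ?f), pathfinish (c ?f)} = {pos (v k), pos (v l)}"
      using parc[OF fE] by auto
    have hk: "pos (v k) \<in> path_image (c ?f)" "pos (v l) \<in> path_image (c ?f)"
      using hends pathstart_in_path_image[of "c ?f"] pathfinish_in_path_image[of "c ?f"] by (auto simp: doubleton_eq_iff)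
    show False
    proof (rule J.no_interleave[of "i - 1" "k - 1" "j - 1" "l - 1" g "c ?f"])
      show "i - 1 < k - 1" "k - 1 < j - 1" "j - 1 < l - 1" "l - 1 < n" using ikjl by auto
      show "arc g" "pathstart g = Q (i - 1)" "pathfinish g = Q (j - 1)" using g Qs by auto
      show "path_image g \<inter> J.C \<subseteq> {Q (i - 1), Q (j - 1)}" by (rule gC)
      show "arc (c ?f)" by (rule harc)
      show "Q (k - 1) \<in> path_image (c ?f)" "Q (l - 1) \<in> path_image (c ?f)" using hk Qs by auto
      show "path_image g \<inter> path_image (c ?f) = {}" by (rule gh)
      show "open_arc g \<subseteq> inside J.C \<and> open_arc (c ?f) \<subseteq> inside J.C \<or>
            open_arc g \<subseteq> outside J.C \<and> open_arc (c ?f) \<subseteq> outside J.C"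
        using sides g CC by simp
    qed
  qed

  define iv where "iv = inv_into {1..n} v"
  have iv: "iv x \<in> {1..n} \<and> v (iv x) = x" if "x \<in> V" for x
    using that bij unfolding iv_def by (metis bij_betw_def inv_into_into f_inv_into_f)
  have ivv: "iv (v i) = i" if "i \<in> {1..n}" for i
    using that vinj unfolding iv_def by (simp add: inv_into_f_f)
  define P where "P = Pp y s"
  define pos' where "pos' x = P (iv x)" for x
  have pos'v: "pos' (v i) = P i" if "i \<in> {1..n}" for i using ivv[OF that] by (simp add: pos'_def)
  have Pinj: "inj P" unfolding P_def by (rule Pp_inj)
  have edges: "\<exists>i j. 1 \<le> i \<and> i < j \<and> j \<le> n \<and> e = {v i, v j}" if e: "e \<in> E'" for e
  proof -
    obtain u w where uw: "u \<in> V" "w \<in> V" "u \<noteq> w" "e = {u, w}"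
      using assms(3) e unfolding simple_graph_def by blast
    have "iv u \<noteq> iv w" using iv uw by metis
    then consider "iv u < iv w" | "iv w < iv u" by linarith
    then show ?thesis
    proof cases
      case 1 then show ?thesis using iv[OF uw(1)] iv[OF uw(2)] uw(4) by (intro exI[of _ "iv u"] exI[of _ "iv w"]) auto
    next
      case 2 then show ?thesis using iv[OF uw(1)] iv[OF uw(2)] uw(4) by (intro exI[of _ "iv w"] exI[of _ "iv u"]) auto
    qed
  qed
  have hull: "convex hull (pos' ` {v i, v j}) = closed_segment (P i) (P j)" if "i \<in> {1..n}" "j \<in> {1..n}" for i j
    using that by (simp add: pos'v segment_convex_hull)
  show ?thesis
  proof (intro exI conjI)
    show "\<forall>i\<in>{1..n}. pos' (v i) = pt y i \<or> pos' (v i) = qt y i"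
      by (simp add: pos'v P_def Pp_def)
    show "straight_line_plane V E' pos'"
      unfolding straight_line_plane_def
    proof (intro conjI ballI impI)
      show "inj_on pos' V"
      proof (rule inj_onI)
        fix x x' assume "x \<in> V" "x' \<in> V" "pos' x = pos' x'"
        then show "x = x'" using iv Pinj unfolding pos'_def inj_def by metis
      qed
    next
      fix e x assume e: "e \<in> E'" and x: "x \<in> V" and xin: "pos' x \<in> convex hull (pos' ` e)"
      obtain i j where ij: "1 \<le> i" "i < j" "j \<le> n" "e = {v i, v j}" using edges[OF e] by blast
      have "P (iv x) \<in> closed_segment (P i) (P j)" using xin hull[of i j] ij by (simp add: pos'_def)
      then have "iv x = i \<or> iv x = j" unfolding P_def using geo_vertex[OF assms(2) ij(1,2)] iv[OF x] by auto
      then show "x \<in> e" using iv[OF x] ij by auto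
    next
      fix e f assume e: "e \<in> E'" and f: "f \<in> E'" and ef: "e \<noteq> f"
      obtain i j where ij: "1 \<le> i" "i < j" "j \<le> n" "e = {v i, v j}" using edges[OF e] by blast
      obtain k l where kl: "1 \<le> k" "k < l" "l \<le> n" "f = {v k, v l}" using edges[OF f] by blast
      have idx: "i \<in> {1..n}" "j \<in> {1..n}" "k \<in> {1..n}" "l \<in> {1..n}" using ij kl by auto
      have ne: "(i, j) \<noteq> (k, l)" using ef ij kl by auto
      have efI: "e \<inter> f = v ` ({i,j} \<inter> {k,l})"
        unfolding ij(4) kl(4) using inj_on_image_Int[OF vinj, of "{i,j}" "{k,l}"] idx by simp
      have pI: "pos' ` (e \<inter> f) = P ` ({i,j} \<inter> {k,l})"
        unfolding efI image_image by (rule image_cong) (use pos'v idx in auto)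
      have lamE: "s j' = s l' \<Longrightarrow> i' < k' \<Longrightarrow> k' < j' \<Longrightarrow> j' < l' \<Longrightarrow> False"
        if "1 \<le> i'" "l' \<le> n" "{v i', v j'} \<in> E'" "{v k', v l'} \<in> E'" for i' j' k' l'
        using lam[of i' k' j' l'] that assms(6) by blast
      have "closed_segment (P i) (P j) \<inter> closed_segment (P k) (P l) \<subseteq> P ` ({i,j} \<inter> {k,l})"
      proof (cases "j \<le> l")
        case True
        show ?thesis unfolding P_def
          by (rule geo_pair[OF assms(2) ij(1,2) kl(1,2) True ne])
             (use lamE[of i l j k] ij kl e f in auto)
      next
        case False
        have "closed_segment (P k) (P l) \<inter> closed_segment (P i) (P j) \<subseteq> P ` ({k,l} \<inter> {i,j})"
          unfolding P_def
          by (rule geo_pair[OF assms(2) kl(1,2) ij(1,2)]) (use lamE[of k j l i] ij kl e f ne False in auto)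
        then show ?thesis by (simp add: Int_commute)
      qed
      then show "convex hull (pos' ` e) \<inter> convex hull (pos' ` f) \<subseteq> pos' ` (e \<inter> f)"
        using hull idx ij kl pI by simp
    qed
  qed
qed




end
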